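(* Let $A\in\mathbb{R}^{d\times d}$ with $A\succ0$ and $u,v\in\mathbb{R}^d$. If $2\langle vv^\top,A^{-1}\rangle<1$, then for every $X\succeq0$, \[ \langle X,(A-vv^\top+uu^\top)^{-1}\rangle\le\langle X,A^{-1}\rangle+\frac{\langle X,A^{-1}vv^\top A^{-1}\rangle}{1-2\langle vv^\top,A^{-1}\rangle}-\frac{\langle X,A^{-1}uu^\top A^{-1}\rangle}{1+2\langle uu^\top,A^{-1}\rangle}. \]
   Context: $\langle M,N\rangle=\operatorname{tr}(M^\top N)$ is the Frobenius inner product. *)

theory Defs
  imports "HOL-Analysis.Analysis"
begin

definition frob :: "real^'n^'n \<Rightarrow> real^'n^'n \<Rightarrow> real" where
  "frob M N = trace (transpose M ** N)"

definition outer :: "real^'n \<Rightarrow> real^'n \<Rightarrow> real^'n^'n" where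
  "outer u v = (\<chi> i j. u $ i * v $ j)"

definition pos_def :: "real^'n^'n \<Rightarrow> bool" where
  "pos_def A \<longleftrightarrow> transpose A = A \<and> (\<forall>x. x \<noteq> 0 \<longrightarrow> x \<bullet> (A *v x) > 0)"

definition pos_semidef :: "real^'n^'n \<Rightarrow> bool" where
  "pos_semidef A \<longleftrightarrow> transpose A = A \<and> (\<forall>x. x \<bullet> (A *v x) \<ge> 0)"

end

theory Submission
  imports Defs
begin

lemma frob_alt: "frob M N = (\<Sum>i\<in>UNIV. \<Sum>j\<in>UNIV. M$i$j * N$i$j)"
  unfolding frob_def trace_def transpose_def matrix_matrix_mult_def
  by simp (rule sum.swap)

lemma frob_add: "frob X (M + N) = frob X M + frob X N"
  by (simp add: frob_alt distrib_left sum.distrib)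
lemma frob_diff: "frob X (M - N) = frob X M - frob X N"
  by (simp add: frob_alt right_diff_distrib sum_subtractf)
lemma frob_scale: "frob X (c *\<^sub>R M) = c * frob X M"
  by (simp add: frob_alt sum_distrib_left mult.left_commute)

lemma frob_outer_left: "frob (outer x y) N = x \<bullet> (N *v y)"
  by (simp add: frob_alt outer_def inner_vec_def matrix_vector_mult_def sum_distrib_left mult_ac)

lemma frob_outer_right: "frob X (outer y y) = y \<bullet> (X *v y)"
  by (simp add: frob_alt outer_def inner_vec_def matrix_vector_mult_def sum_distrib_left mult_ac)

lemma outer_mulv: "outer a b *v x = (b \<bullet> x) *\<^sub>R a"
proof -
  have "\<And>i. (\<Sum>j\<in>UNIV. a $ i * (b $ j * x $ j)) = a $ i * (\<Sum>j\<in>UNIV. b $ j * x $ j)"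
    by (simp add: sum_distrib_left)
  thus ?thesis by (simp add: outer_def inner_vec_def matrix_vector_mult_def vec_eq_iff mult_ac)
qed

lemma inv_unique:
  fixes C M :: "real^'n^'n"
  assumes "C ** M = mat 1"
  shows "matrix_inv C = M"
proof -
  have MC: "M ** C = mat 1" using assms by (rule matrix_left_right_inverse1)
  have "\<exists>N. C ** N = mat 1 \<and> N ** C = mat 1" using assms MC by blast
  hence N: "C ** matrix_inv C = mat 1 \<and> matrix_inv C ** C = mat 1"
    unfolding matrix_inv_def by (rule someI_ex)
  have "matrix_inv C = matrix_inv C ** (C ** M)" using assms by simp
  also have "\<dots> = M" using N by (simp add: matrix_mul_assoc)
  finally show ?thesis .
qed

lemma transpose_mulv: fixes A :: "real^'n^'m" shows "x \<bullet> (A *v y) = (transpose A *v x) \<bullet> y"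
  by (simp add: dot_lmul_matrix)

lemma pd_inv:
  fixes A :: "real^'n^'n"
  assumes "pos_def A"
  shows "A ** matrix_inv A = mat 1" "matrix_inv A ** A = mat 1"
    "transpose (matrix_inv A) = matrix_inv A"
    "\<And>x. x \<bullet> (matrix_inv A *v x) \<ge> 0"
proof -
  have inj: "inj ((*v) A)"
  proof (rule linear_injective_0[THEN iffD2])
    show "linear ((*v) A)" by simp
    show "\<forall>x. A *v x = 0 \<longrightarrow> x = 0"
    proof (intro allI impI)
      fix x assume "A *v x = 0"
      hence "x \<bullet> (A *v x) = 0" by simp
      thus "x = 0" using assms unfolding pos_def_def by force
    qed
  qed
  then obtain B where "B ** A = mat 1" using matrix_left_invertible_injective by blast
  hence "\<exists>N. A ** N = mat 1 \<and> N ** A = mat 1" using matrix_left_right_inverse by blast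
  hence N: "A ** matrix_inv A = mat 1 \<and> matrix_inv A ** A = mat 1"
    unfolding matrix_inv_def by (rule someI_ex)
  thus 1: "A ** matrix_inv A = mat 1" "matrix_inv A ** A = mat 1" by auto
  have At: "transpose A = A" using assms pos_def_def by blast
  have "transpose (matrix_inv A) ** A = mat 1"
    using 1(1) by (metis At matrix_transpose_mul transpose_mat)
  hence "transpose (matrix_inv A) = transpose (matrix_inv A) ** (A ** matrix_inv A)" using 1 by simp
  also have "\<dots> = matrix_inv A" using \<open>transpose (matrix_inv A) ** A = mat 1\<close>
    by (simp add: matrix_mul_assoc)
  finally show T: "transpose (matrix_inv A) = matrix_inv A" .
  fix x
  let ?z = "matrix_inv A *v x"
  have "x = A *v ?z" using 1 by (simp add: matrix_vector_mul_assoc)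
  hence "x \<bullet> ?z = (A *v ?z) \<bullet> ?z" by simp
  also have "\<dots> = ?z \<bullet> (A *v ?z)" by (simp add: inner_commute)
  finally have eq: "x \<bullet> ?z = ?z \<bullet> (A *v ?z)" .
  show "x \<bullet> (matrix_inv A *v x) \<ge> 0"
  proof (cases "?z = 0")
    case True thus ?thesis by simp
  next
    case False thus ?thesis using assms eq unfolding pos_def_def by (simp add: less_imp_le)
  qed
qed

lemma l1_aux:
  fixes e f S D c :: real
  assumes "e \<noteq> 0" "f \<noteq> 0" "S \<noteq> 0"
  shows "(1/f - 1/e + (c/e)^2/(S/e)) * (e*f*S*D) = e*S*D - f*S*D + c^2*f*D"
  using assms by (simp add: field_simps power2_eq_square)

lemma eq_aux:
  fixes e f g s t P Qq R :: real
  shows "Qq/f - P/g - (Qq/e - (P + 2*t*R + t^2*Qq)/s)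
     = P*(1/s - 1/g) + 2*R*(t/s) + Qq*(1/f - 1/e + t^2/s)"
  by (simp add: algebra_simps add_divide_distrib diff_divide_distrib)

lemma scalar_ineq:
  fixes a b c P Qq R :: real
  assumes a0: "0 \<le> a" and a1: "a < 1/2" and b0: "0 \<le> b" and cs: "c^2 \<le> a*b" and q0: "Qq \<ge> 0"
    and bc: "b = 0 \<Longrightarrow> c = 0"
    and H: "\<And>mu. P + 2*mu*R + mu^2*Qq \<ge> 0"
  shows "Qq/(1-a) - (P + 2*(c/(1-a))*R + (c/(1-a))^2*Qq)/(1+b+c^2/(1-a)) \<le> Qq/(1-2*a) - P/(1+2*b)"
proof (cases "b = 0")
  case True
  hence c: "c = 0" using bc by simp
  have "Qq/(1-a) \<le> Qq/(1-2*a)" using a0 a1 q0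
    by (intro divide_left_mono) auto
  thus ?thesis using True c by simp
next
  case False
  hence bp: "b > 0" using b0 by simp
  define D where "D = b*(1-a) - c^2"
  have "a*b < (1-a)*b" using bp a1 by (intro mult_strict_right_mono) auto
  hence "c^2 < b*(1-a)" using cs by (simp add: mult.commute)
  hence Dp: "D > 0" unfolding D_def by simp
  define s where "s = 1+b+c^2/(1-a)"
  have sp: "s > 0" unfolding s_def using a1 bp by (simp add: add_pos_nonneg)
  define g where "g = 1+2*b"
  have gp: "g > 0" unfolding g_def using bp by simp
  define mu where "mu = c*g/D"
  define kk where "kk = D/((1-a) * s * g)"
  have kp: "kk \<ge> 0" unfolding kk_def using Dp sp a1 gp by simp
  have br: "Qq*(a*b-c^2)/((1-2*a)*D) \<ge> 0" using q0 cs a1 Dp by simp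
  have e0: "1 - a > 0" "1 - 2*a > 0" "1 + 2*b > 0" using a1 bp by auto
  define S where "S = (1-a)*(1+b) + c^2"
  have Sp: "S > 0" unfolding S_def using e0 bp by (simp add: add_pos_nonneg)
  have sS: "s = S/(1-a)" unfolding s_def S_def using e0 by (simp add: field_simps)
  have k2: "kk = D/(S*g)" unfolding kk_def sS using e0 by simp
  have hD: "(1-a)*g - S = D" unfolding S_def D_def g_def by (simp add: algebra_simps)
  have "1/s - 1/g = ((1-a)*g - S)/(S*g)"
    unfolding sS using e0 Sp gp by (simp add: field_simps)
  hence cP: "1/s - 1/g = kk" unfolding hD k2 .
  have km: "kk*mu = c/S" unfolding k2 mu_def using Dp Sp e0 gp by (simp add: field_simps)
  have cR: "(c/(1-a))/s = kk*mu" unfolding km sS using e0 Sp gp by (simp add: field_simps)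
  have km2: "kk*mu^2 = c^2*g/(S*D)" unfolding k2 mu_def using Dp Sp e0 gp
    by (simp add: field_simps power2_eq_square)
  have l1: "(1/(1-2*a) - 1/(1-a) + (c/(1-a))^2/s) * ((1-a)*(1-2*a)*S*D) = a*S*D + c^2*(1-2*a)*D"
    unfolding sS using l1_aux[of "1-a" "1-2*a" S c D] e0 Sp by (simp add: algebra_simps)
  have l2: "(c^2*g/(S*D) + (a*b-c^2)/((1-2*a)*D)) * ((1-a)*(1-2*a)*S*D)
      = c^2*g*(1-a)*(1-2*a) + (a*b-c^2)*(1-a)*S"
    using e0 Sp Dp gp by (simp add: field_simps)
  have l3: "a*S*D + c^2*(1-2*a)*D = c^2*g*(1-a)*(1-2*a) + (a*b-c^2)*(1-a)*S"
    unfolding S_def D_def g_def by (simp add: algebra_simps power2_eq_square)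
  have nz: "(1-a)*(1-2*a)*S*D \<noteq> 0" using e0 Sp Dp gp by simp
  have cQ: "1/(1-2*a) - 1/(1-a) + (c/(1-a))^2/s = kk*mu^2 + (a*b-c^2)/((1-2*a)*D)"
    unfolding km2 using l1 l2 l3 nz by (metis mult_right_cancel)
  have eq: "Qq/(1-2*a) - P/g - (Qq/(1-a) - (P + 2*(c/(1-a))*R + (c/(1-a))^2*Qq)/s)
     = P*(1/s - 1/g) + 2*R*((c/(1-a))/s) + Qq*(1/(1-2*a) - 1/(1-a) + (c/(1-a))^2/s)"
    by (rule eq_aux)
  also have "\<dots> = kk*(P + 2*mu*R + mu^2*Qq) + Qq*(a*b-c^2)/((1-2*a)*D)"
    unfolding cP cR cQ by (simp add: algebra_simps)
  finally have eq: "Qq/(1-2*a) - P/g - (Qq/(1-a) - (P + 2*(c/(1-a))*R + (c/(1-a))^2*Qq)/s)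
     = kk*(P + 2*mu*R + mu^2*Qq) + Qq*(a*b-c^2)/((1-2*a)*D)" .
  have "kk*(P + 2*mu*R + mu^2*Qq) \<ge> 0" using kp H by simp
  thus ?thesis using eq br unfolding s_def g_def by linarith
qed


lemma quad:
  fixes K :: "real^'n^'n"
  assumes "transpose K = K"
  shows "(x + m *\<^sub>R y) \<bullet> (K *v (x + m *\<^sub>R y)) = x \<bullet> (K *v x) + 2*m*(x \<bullet> (K *v y)) + m^2*(y \<bullet> (K *v y))"
proof -
  have e: "y \<bullet> (K *v x) = x \<bullet> (K *v y)"
    by (metis assms transpose_mulv inner_commute)
  have "K *v (x + m *\<^sub>R y) = K *v x + m *\<^sub>R (K *v y)"
    by (simp only: matrix_vector_right_distrib matrix_vector_mult_scaleR)
  hence "(x + m *\<^sub>R y) \<bullet> (K *v (x + m *\<^sub>R y))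
     = x \<bullet> (K *v x) + m * (x \<bullet> (K *v y)) + m * (y \<bullet> (K *v x)) + m * m * (y \<bullet> (K *v y))"
    by (simp only: inner_add_left inner_add_right inner_scaleR_left inner_scaleR_right) (simp add: algebra_simps)
  thus ?thesis unfolding e power2_eq_square by (simp add: algebra_simps)
qed

lemma cs_aux:
  fixes a b c :: real
  assumes H: "\<And>m. a + 2*m*c + m^2*b \<ge> 0" and b0: "b \<ge> 0"
  shows "c^2 \<le> a*b \<and> (b = 0 \<longrightarrow> c = 0)"
proof (cases "b = 0")
  case True
  have c0: "c = 0"
  proof (rule ccontr)
    assume cn: "c \<noteq> 0"
    define m where "m = -(a+1)/(2*c)"
    have e: "2*m*c = -(a+1)" unfolding m_def using cn by (simp add: field_simps)
    have "a + 2*m*c + m^2*b \<ge> 0" by (rule H)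
    thus False using True e by simp
  qed
  thus ?thesis using True by simp
next
  case False
  hence bp: "b > 0" using b0 by simp
  define m where "m = -c/b"
  have e: "2*m*c + m^2*b = -(c^2/b)" unfolding m_def using bp by (simp add: field_simps power2_eq_square)
  have "a + 2*m*c + m^2*b \<ge> 0" by (rule H)
  hence "c^2/b \<le> a" using e by simp
  hence "c^2 \<le> a*b" using bp by (simp add: pos_divide_le_eq)
  thus ?thesis using False by simp
qed

theorem lemma2p13:
  fixes A X :: "real^'d^'d" and u v :: "real^'d"
  assumes "pos_def A"
    and "2 * frob (outer v v) (matrix_inv A) < 1"
    and "pos_semidef X"
  shows "frob X (matrix_inv (A - outer v v + outer u u))
    \<le> frob X (matrix_inv A)
       + frob X (matrix_inv A ** outer v v ** matrix_inv A) / (1 - 2 * frob (outer v v) (matrix_inv A))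
       - frob X (matrix_inv A ** outer u u ** matrix_inv A) / (1 + 2 * frob (outer u u) (matrix_inv A))"
proof -
  define B where "B = matrix_inv A"
  have AB: "A ** B = mat 1" and BA: "B ** A = mat 1" and BT: "transpose B = B"
    and Bpsd: "\<And>x. x \<bullet> (B *v x) \<ge> 0"
    using pd_inv[OF assms(1)] unfolding B_def by auto
  have XT: "transpose X = X" and Xpsd: "\<And>x. x \<bullet> (X *v x) \<ge> 0"
    using assms(3) unfolding pos_semidef_def by auto
  define q where "q = B *v v"
  define p where "p = B *v u"
  define a where "a = v \<bullet> q"
  define b where "b = u \<bullet> p"
  define c where "c = v \<bullet> p"
  have cu: "u \<bullet> q = c" unfolding c_def q_def p_def by (metis BT transpose_mulv inner_commute)
  have a0: "a \<ge> 0" unfolding a_def q_def by (rule Bpsd)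
  have b0: "b \<ge> 0" unfolding b_def p_def by (rule Bpsd)
  have fa: "frob (outer v v) B = a" unfolding a_def q_def frob_outer_left ..
  have fb: "frob (outer u u) B = b" unfolding b_def p_def frob_outer_left ..
  have a1: "a < 1/2" using assms(2) fa unfolding B_def by simp
  have csq: "c^2 \<le> a*b \<and> (b = 0 \<longrightarrow> c = 0)"
  proof (rule cs_aux[OF _ b0])
    fix m :: real
    have "(v + m *\<^sub>R u) \<bullet> (B *v (v + m *\<^sub>R u)) \<ge> 0" by (rule Bpsd)
    thus "a + 2*m*c + m^2*b \<ge> 0" unfolding quad[OF BT] a_def b_def c_def q_def p_def .
  qed
  define t where "t = c/(1-a)"
  define s where "s = 1 + b + c^2/(1-a)"
  have e0: "1 - a > 0" using a1 by simp
  have sp: "s > 0" unfolding s_def using e0 b0 by (simp add: add_pos_nonneg)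
  define w where "w = p + t *\<^sub>R q"
  define M where "M = B + (1/(1-a)) *\<^sub>R outer q q - (1/s) *\<^sub>R outer w w"
  define C where "C = A - outer v v + outer u u"
  have Aq: "A *v q = v" unfolding q_def using AB by (simp add: matrix_vector_mul_assoc)
  have Ap: "A *v p = u" unfolding p_def using AB by (simp add: matrix_vector_mul_assoc)
  have CM: "C ** M = mat 1"
  proof -
    have "(C ** M) *v x = mat 1 *v x" for x
    proof -
      define y where "y = M *v x"
      define wx where "wx = w \<bullet> x"
      define qx where "qx = q \<bullet> x"
      define px where "px = p \<bullet> x"
      have wx: "wx = px + t * qx" unfolding wx_def px_def qx_def w_def by (simp add: inner_add_left)
      have y: "y = B *v x + (qx/(1-a)) *\<^sub>R q - (wx/s) *\<^sub>R w"
        unfolding y_def M_def qx_def wx_def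
        by (simp add: matrix_vector_mult_add_rdistrib matrix_vector_mult_diff_rdistrib
            scaleR_matrix_vector_assoc[symmetric] outer_mulv inner_commute)
      have ABx: "A *v (B *v x) = x" using AB by (simp add: matrix_vector_mul_assoc)
      have Aw: "A *v w = u + t *\<^sub>R v" unfolding w_def
        by (simp add: matrix_vector_right_distrib matrix_vector_mult_scaleR Ap Aq)
      have Ay: "A *v y = x + (qx/(1-a)) *\<^sub>R v - (wx/s) *\<^sub>R (u + t *\<^sub>R v)"
        unfolding y by (simp add: matrix_vector_right_distrib matrix_vector_mult_diff_distrib
            matrix_vector_mult_scaleR ABx Aq Aw)
      have vBx: "v \<bullet> (B *v x) = qx" unfolding qx_def q_def
        by (metis BT transpose_mulv inner_commute)
      have uBx: "u \<bullet> (B *v x) = px" unfolding px_def p_def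
        by (metis BT transpose_mulv inner_commute)
      have vw: "v \<bullet> w = c + t*a" unfolding w_def c_def a_def by (simp add: inner_add_right)
      have uw: "u \<bullet> w = b + t*c" unfolding w_def b_def by (simp add: inner_add_right cu)
      have vy: "v \<bullet> y = qx + (qx/(1-a))*a - (wx/s)*(c + t*a)"
        unfolding y by (simp add: inner_add_right inner_diff_right vBx vw a_def)
      have uy: "u \<bullet> y = px + (qx/(1-a))*c - (wx/s)*(b + t*c)"
        unfolding y by (simp add: inner_add_right inner_diff_right uBx uw cu)
      have Cy: "C *v y = A *v y - (v \<bullet> y) *\<^sub>R v + (u \<bullet> y) *\<^sub>R u"
        unfolding C_def by (simp add: matrix_vector_mult_add_rdistrib matrix_vector_mult_diff_rdistrib outer_mulv)
      define al where "al = qx/(1-a) - (wx/s)*t - (v \<bullet> y)"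
      define be where "be = u \<bullet> y - wx/s"
      have "C *v y = x + al *\<^sub>R v + be *\<^sub>R u"
        unfolding Cy Ay al_def be_def by (simp add: algebra_simps)
      moreover have "al = 0" unfolding al_def vy t_def using e0 sp
        by (simp add: field_simps)
      moreover have "be = 0"
      proof -
        have st: "1 + b + t*c = s" unfolding s_def t_def by (simp add: power2_eq_square)
        have tq: "(qx/(1-a))*c = t*qx" unfolding t_def by simp
        have "be = wx - (wx/s)*(1 + b + t*c)" unfolding be_def uy wx tq using sp by (simp add: field_simps)
        also have "\<dots> = 0" unfolding st using sp by simp
        finally show ?thesis .
      qed
      ultimately show ?thesis unfolding y_def by (simp add: matrix_vector_mul_assoc)
    qed
    thus ?thesis using matrix_eq by blast
  qed
  have invC: "matrix_inv C = M" by (rule inv_unique[OF CM])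
  define Q where "Q z = z \<bullet> (X *v z)" for z
  define P where "P = Q p"
  define Qq where "Qq = Q q"
  define R where "R = p \<bullet> (X *v q)"
  have BvB: "B ** outer v v ** B = outer q q"
  proof -
    have "(B ** outer v v ** B) *v x = outer q q *v x" for x
    proof -
      have "v \<bullet> (B *v x) = q \<bullet> x" unfolding q_def by (metis BT transpose_mulv inner_commute)
      thus ?thesis by (simp add: matrix_vector_mul_assoc[symmetric] outer_mulv matrix_vector_mult_scaleR q_def)
    qed
    thus ?thesis using matrix_eq by blast
  qed
  have BuB: "B ** outer u u ** B = outer p p"
  proof -
    have "(B ** outer u u ** B) *v x = outer p p *v x" for x
    proof -
      have "u \<bullet> (B *v x) = p \<bullet> x" unfolding p_def by (metis BT transpose_mulv inner_commute)
      thus ?thesis by (simp add: matrix_vector_mul_assoc[symmetric] outer_mulv matrix_vector_mult_scaleR p_def)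
    qed
    thus ?thesis using matrix_eq by blast
  qed
  have fM: "frob X M = frob X B + Qq/(1-a) - Q w/s"
    unfolding M_def Qq_def Q_def by (simp add: frob_add frob_diff frob_scale frob_outer_right)
  have Qw: "Q w = P + 2*t*R + t^2*Qq" unfolding Q_def w_def P_def Qq_def R_def quad[OF XT] ..
  have H: "\<And>m. P + 2*m*R + m^2*Qq \<ge> 0"
  proof -
    fix m :: real
    have "Q (p + m *\<^sub>R q) \<ge> 0" unfolding Q_def by (rule Xpsd)
    thus "P + 2*m*R + m^2*Qq \<ge> 0" unfolding Q_def P_def Qq_def R_def quad[OF XT] .
  qed
  have q0: "Qq \<ge> 0" unfolding Qq_def Q_def by (rule Xpsd)
  have main: "Qq/(1-a) - (P + 2*(c/(1-a))*R + (c/(1-a))^2*Qq)/(1+b+c^2/(1-a)) \<le> Qq/(1-2*a) - P/(1+2*b)"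
    using scalar_ineq[OF a0 a1 b0 _ q0 _ H] csq by blast
  have l: "frob X (matrix_inv C) = frob X B + Qq/(1-a) - (P + 2*(c/(1-a))*R + (c/(1-a))^2*Qq)/(1+b+c^2/(1-a))"
    unfolding invC fM Qw t_def s_def ..
  have r1: "frob X (B ** outer v v ** B) = Qq" unfolding BvB frob_outer_right Qq_def Q_def ..
  have r2: "frob X (B ** outer u u ** B) = P" unfolding BuB frob_outer_right P_def Q_def ..
  show ?thesis unfolding B_def[symmetric] C_def[symmetric] l r1 r2 fa fb using main by simp
qed

end
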